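(* Let $R$ be a finite commutative local Frobenius ring with residue field $\mathbb{F}_q$, and let $\ell$ be a nonnegative integer. For $i=1,2$, let $C_i$ be a linear code of length $n$ over $R$ with generator matrix $\mathrm{G}_i$ and parity check matrix $\mathrm{H}_i$. Then $\{C_1,C_2\}$ is an $\ell$-DLIP if and only if $\texttt{Rank}_q(\mathrm{H}_2\mathrm{G}_1^\top)=\texttt{Rank}_q(\mathrm{G}_1)-\ell$ or $\texttt{Rank}_q(\mathrm{H}_1\mathrm{G}_2^\top)=\texttt{Rank}_q(\mathrm{G}_2)-\ell$.
   Context: A linear code of length $n$ over $R$ is an $R$-submodule of $R^n$; $\dim(C):=\log_q|C|$. A pair $\{C,D\}$ of linear codes is an $\ell$-DLIP ($\ell$-dimension linear intersection pair) if $\dim(C\cap D)=\ell$. A generator matrix of $C$ is a matrix whose rows generate $C$; a parity check matrix of $C$ is a generator matrix of $C^\perp$ with respect to the standard inner product $\sum_j u_jc_j$. For a matrix $\mathrm{A}$ over $R$, $\texttt{Rank}_q(\mathrm{A}):=\log_q|M|$ where $M$ is the $R$-submodule spanned by the rows of $\mathrm{A}$. *)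

theory Defs
  imports "Jordan_Normal_Form.Matrix"
begin

definition is_ideal :: "'a::comm_ring_1 set \<Rightarrow> bool" where
  "is_ideal I \<longleftrightarrow> 0 \<in> I \<and> (\<forall>x\<in>I. \<forall>y\<in>I. x + y \<in> I) \<and> (\<forall>r. \<forall>x\<in>I. r * x \<in> I)"

definition is_maximal_ideal :: "'a::comm_ring_1 set \<Rightarrow> bool" where
  "is_maximal_ideal M \<longleftrightarrow> is_ideal M \<and> M \<noteq> UNIV \<and>
     (\<forall>J. is_ideal J \<and> M \<subseteq> J \<and> J \<noteq> UNIV \<longrightarrow> J = M)"

definition local_ring :: "'a::comm_ring_1 itself \<Rightarrow> bool" where
  "local_ring _ \<longleftrightarrow> (\<exists>!M::'a set. is_maximal_ideal M)"

definition max_ideal :: "'a::comm_ring_1 itself \<Rightarrow> 'a set" where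
  "max_ideal _ = (THE M::'a set. is_maximal_ideal M)"

definition annihilator :: "'a::comm_ring_1 set \<Rightarrow> 'a set" where
  "annihilator S = {x. \<forall>y\<in>S. x * y = 0}"

text \<open>A finite local ring R with maximal ideal m is Frobenius iff its socle
  soc(R) = ann(m) is isomorphic to R/m as an R-module, i.e. soc(R) is a cyclic
  module R s whose generator s has annihilator exactly m.\<close>
definition local_frobenius :: "'a::comm_ring_1 itself \<Rightarrow> bool" where
  "local_frobenius T \<longleftrightarrow> local_ring T \<and>
     (\<exists>s::'a. annihilator (max_ideal T) = range (\<lambda>r. r * s) \<and>
              {r. r * s = 0} = max_ideal T)"

definition residue_q :: "'a::comm_ring_1 itself \<Rightarrow> nat" where
  "residue_q T = card ((UNIV::'a set) // {(x, y). x - y \<in> max_ideal T})"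

definition linear_code :: "nat \<Rightarrow> 'a::comm_ring_1 vec set \<Rightarrow> bool" where
  "linear_code n C \<longleftrightarrow> C \<subseteq> carrier_vec n \<and> 0\<^sub>v n \<in> C \<and>
     (\<forall>x\<in>C. \<forall>y\<in>C. x + y \<in> C) \<and> (\<forall>r. \<forall>x\<in>C. r \<cdot>\<^sub>v x \<in> C)"

definition dual_code :: "nat \<Rightarrow> 'a::comm_ring_1 vec set \<Rightarrow> 'a vec set" where
  "dual_code n C = {u \<in> carrier_vec n. \<forall>c\<in>C. u \<bullet> c = 0}"

definition row_span :: "'a::comm_ring_1 mat \<Rightarrow> 'a vec set" where
  "row_span A = {transpose_mat A *\<^sub>v c | c. c \<in> carrier_vec (dim_row A)}"

definition generator_matrix :: "nat \<Rightarrow> 'a::comm_ring_1 vec set \<Rightarrow> 'a mat \<Rightarrow> bool" where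
  "generator_matrix n C G \<longleftrightarrow> dim_col G = n \<and> row_span G = C"

definition parity_check_matrix :: "nat \<Rightarrow> 'a::comm_ring_1 vec set \<Rightarrow> 'a mat \<Rightarrow> bool" where
  "parity_check_matrix n C H \<longleftrightarrow> generator_matrix n (dual_code n C) H"

definition code_dim :: "nat \<Rightarrow> 'a::comm_ring_1 vec set \<Rightarrow> real" where
  "code_dim q C = log (real q) (real (card C))"

definition rank_q :: "nat \<Rightarrow> 'a::comm_ring_1 mat \<Rightarrow> real" where
  "rank_q q A = log (real q) (real (card (row_span A)))"

definition DLIP :: "nat \<Rightarrow> nat \<Rightarrow> 'a::comm_ring_1 vec set \<Rightarrow> 'a vec set \<Rightarrow> bool" where
  "DLIP q l C D \<longleftrightarrow> code_dim q (C \<inter> D) = real l"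

end

theory Submission
  imports Defs
begin

lemma card_fibers:
  assumes "finite A" and "\<And>a. a \<in> A \<Longrightarrow> card {x\<in>A. f x = f a} = k"
  shows "card A = k * card (f ` A)"
proof -
  have A: "A = (\<Union>y\<in>f ` A. {x\<in>A. f x = y})" by auto
  have "card (\<Union>y\<in>f ` A. {x\<in>A. f x = y}) = (\<Sum>y\<in>f ` A. card {x\<in>A. f x = y})"
    by (rule card_UN_disjoint) (use assms(1) in auto)
  also have "\<dots> = (\<Sum>y\<in>f ` A. k)"
    by (rule sum.cong) (use assms(2) in auto)
  finally show ?thesis using A by simp
qed

lemma ideal_zero: "is_ideal I \<Longrightarrow> 0 \<in> I" by (simp add: is_ideal_def)
lemma ideal_add: "is_ideal I \<Longrightarrow> x \<in> I \<Longrightarrow> y \<in> I \<Longrightarrow> x + y \<in> I" by (simp add: is_ideal_def)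
lemma ideal_mult: "is_ideal I \<Longrightarrow> x \<in> I \<Longrightarrow> r * x \<in> I" by (simp add: is_ideal_def)
lemma ideal_uminus: "is_ideal I \<Longrightarrow> x \<in> I \<Longrightarrow> - x \<in> I"
  using ideal_mult[of I x "-1"] by simp
lemma ideal_diff: "is_ideal I \<Longrightarrow> x \<in> I \<Longrightarrow> y \<in> I \<Longrightarrow> x - y \<in> I"
  using ideal_add[of I x "-y"] ideal_uminus[of I y] by simp
lemma ideal_one: "is_ideal I \<Longrightarrow> 1 \<in> I \<Longrightarrow> I = UNIV"
  using ideal_mult[of I 1] by force

lemma local_max:
  assumes "local_ring TYPE('a::comm_ring_1)"
  shows "is_maximal_ideal (max_ideal TYPE('a))"
    and "is_maximal_ideal (M::'a set) \<Longrightarrow> M = max_ideal TYPE('a)"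
proof -
  show "is_maximal_ideal (max_ideal TYPE('a))"
    using assms unfolding local_ring_def max_ideal_def by (rule theI')
  show "is_maximal_ideal (M::'a set) \<Longrightarrow> M = max_ideal TYPE('a)"
    using assms unfolding local_ring_def max_ideal_def by (rule the1_equality[symmetric])
qed

lemma exists_maximal:
  assumes "finite (UNIV::'a::comm_ring_1 set)" "is_ideal (I::'a set)" "I \<noteq> UNIV"
  shows "\<exists>M. is_maximal_ideal M \<and> I \<subseteq> M"
proof -
  define S where "S = {J::'a set. is_ideal J \<and> I \<subseteq> J \<and> J \<noteq> UNIV}"
  have "finite S"
    by (rule finite_subset[of _ "Pow UNIV"]) (auto simp: assms(1) Finite_Set.finite_set)
  moreover have "I \<in> S" using assms unfolding S_def by blast
  hence "S \<noteq> {}" by blast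
  ultimately obtain M where M: "M \<in> S" "\<And>b. b \<in> S \<Longrightarrow> M \<le> b \<Longrightarrow> M = b"
    using finite_has_maximal[of S] by blast
  have M1: "is_ideal M" "I \<subseteq> M" "M \<noteq> UNIV" using M(1) unfolding S_def by blast+
  have "is_maximal_ideal M" unfolding is_maximal_ideal_def
  proof (intro conjI allI impI)
    fix J assume J: "is_ideal J \<and> M \<subseteq> J \<and> J \<noteq> UNIV"
    hence "J \<in> S" using M1 unfolding S_def by blast
    thus "J = M" using M(2)[of J] J by blast
  qed (use M1 in blast)+
  thus ?thesis using M1 by blast
qed

lemma nonmax_unit:
  assumes "local_ring TYPE('a::comm_ring_1)" "finite (UNIV::'a set)"
    and "u \<notin> max_ideal TYPE('a)"
  shows "\<exists>v. u * v = 1"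
proof (rule ccontr)
  assume nu: "\<not> (\<exists>v. u * v = 1)"
  have False if "u \<in> max_ideal TYPE('a)" using that assms(3) by blast
  moreover have "u \<in> max_ideal TYPE('a)"
  proof -
  let ?I = "range (\<lambda>r. r * u)"
  have "is_ideal ?I" unfolding is_ideal_def
  proof (intro conjI ballI allI)
    show "0 \<in> ?I" by (rule image_eqI[of _ _ 0]) auto
  next
    fix x y assume "x \<in> ?I" "y \<in> ?I"
    then obtain a b where "x = a * u" "y = b * u" by blast
    thus "x + y \<in> ?I" by (intro image_eqI[of _ _ "a + b"]) (auto simp: distrib_right)
  next
    fix r x assume "x \<in> ?I"
    then obtain a where "x = a * u" by blast
    thus "r * x \<in> ?I" by (intro image_eqI[of _ _ "r * a"]) (auto simp: mult.assoc)
  qed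
  moreover have "?I \<noteq> UNIV"
  proof
    assume "?I = UNIV"
    hence "1 \<in> ?I" by simp
    then obtain v where "1 = v * u" by blast
    thus False using nu mult.commute by metis
  qed
  ultimately obtain M where M: "is_maximal_ideal M" "?I \<subseteq> M"
    using exists_maximal[OF assms(2)] by blast
  have "u \<in> ?I" by (rule image_eqI[of _ _ 1]) simp_all
  hence "u \<in> M" using M(2) by blast
  thus "u \<in> max_ideal TYPE('a)" using local_max(2)[OF assms(1) M(1)] by simp
  qed
  ultimately show False by blast
qed

lemma one_not_max:
  assumes "local_ring TYPE('a::comm_ring_1)"
  shows "(1::'a) \<notin> max_ideal TYPE('a)"
proof
  assume "(1::'a) \<in> max_ideal TYPE('a)"
  moreover have "is_ideal (max_ideal TYPE('a))" "max_ideal TYPE('a) \<noteq> UNIV"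
    using local_max(1)[OF assms] unfolding is_maximal_ideal_def by blast+
  ultimately show False using ideal_one by blast
qed

lemma finite_carrier_vec:
  assumes "finite (UNIV::'a set)"
  shows "finite (carrier_vec n :: 'a vec set)"
proof -
  have sub: "carrier_vec n \<subseteq> (\<lambda>g. vec n g) ` ({0..<n} \<rightarrow>\<^sub>E (UNIV::'a set))"
  proof
    fix v :: "'a vec" assume v: "v \<in> carrier_vec n"
    have "v = vec n (restrict (($) v) {0..<n})"
      by (rule eq_vecI) (use v in auto)
    moreover have "restrict (($) v) {0..<n} \<in> {0..<n} \<rightarrow>\<^sub>E (UNIV::'a set)" by simp
    ultimately show "v \<in> (\<lambda>g. vec n g) ` ({0..<n} \<rightarrow>\<^sub>E UNIV)" by (rule image_eqI)
  qed
  have fin: "finite ({0..<n} \<rightarrow>\<^sub>E (UNIV::'a set))"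
    by (rule finite_PiE) (simp_all add: assms)
  show ?thesis by (rule finite_subset[OF sub finite_imageI[OF fin]])
qed

lemma lc_carrier: "linear_code n C \<Longrightarrow> x \<in> C \<Longrightarrow> x \<in> carrier_vec n"
  by (auto simp: linear_code_def)
lemma lc_zero: "linear_code n C \<Longrightarrow> 0\<^sub>v n \<in> C"
  by (auto simp: linear_code_def)
lemma lc_add: "linear_code n C \<Longrightarrow> x \<in> C \<Longrightarrow> y \<in> C \<Longrightarrow> x + y \<in> C"
  by (auto simp: linear_code_def)
lemma lc_smult: "linear_code n C \<Longrightarrow> x \<in> C \<Longrightarrow> r \<cdot>\<^sub>v x \<in> C"
  by (auto simp: linear_code_def)
lemma lc_diff:
  assumes "linear_code n C" "x \<in> C" "y \<in> C"
  shows "x - y \<in> C"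
proof -
  have "x - y = x + (-1) \<cdot>\<^sub>v y"
    by (rule eq_vecI) (use assms lc_carrier[OF assms(1)] in auto)
  moreover have "(-1) \<cdot>\<^sub>v y \<in> C" by (rule lc_smult[OF assms(1,3)])
  ultimately show ?thesis using lc_add[OF assms(1,2)] by simp
qed

lemma dual_lc: "C \<subseteq> carrier_vec n \<Longrightarrow> linear_code n (dual_code n C)"
  unfolding linear_code_def dual_code_def
proof (intro conjI ballI allI)
  assume C: "C \<subseteq> carrier_vec n"
  show "{u \<in> carrier_vec n. \<forall>c\<in>C. u \<bullet> c = 0} \<subseteq> carrier_vec n" by blast
  show "0\<^sub>v n \<in> {u \<in> carrier_vec n. \<forall>c\<in>C. u \<bullet> c = 0}" using C by auto
  fix x y assume x: "x \<in> {u \<in> carrier_vec n. \<forall>c\<in>C. u \<bullet> c = 0}"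
    and y: "y \<in> {u \<in> carrier_vec n. \<forall>c\<in>C. u \<bullet> c = 0}"
  have "(x + y) \<bullet> c = 0" if c: "c \<in> C" for c
    using add_scalar_prod_distrib[of x n y c] x y c C by auto
  thus "x + y \<in> {u \<in> carrier_vec n. \<forall>c\<in>C. u \<bullet> c = 0}" using x y by auto
next
  assume C: "C \<subseteq> carrier_vec n"
  fix r x assume x: "x \<in> {u \<in> carrier_vec n. \<forall>c\<in>C. u \<bullet> c = 0}"
  have "(r \<cdot>\<^sub>v x) \<bullet> c = 0" if c: "c \<in> C" for c
    using smult_scalar_prod_distrib[of x n c r] x c C by auto
  thus "r \<cdot>\<^sub>v x \<in> {u \<in> carrier_vec n. \<forall>c\<in>C. u \<bullet> c = 0}" using x by auto
qed

definition vspan :: "'a::comm_ring_1 vec set \<Rightarrow> 'a vec \<Rightarrow> 'a vec set" where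
  "vspan D x = {d + r \<cdot>\<^sub>v x | d r. d \<in> D}"

lemma vspan_lc:
  assumes D: "linear_code n D" and x: "x \<in> carrier_vec n"
  shows "linear_code n (vspan D x)"
  unfolding linear_code_def
proof (intro conjI ballI allI)
  show "vspan D x \<subseteq> carrier_vec n" using lc_carrier[OF D] x by (auto simp: vspan_def)
  have "0\<^sub>v n = 0\<^sub>v n + 0 \<cdot>\<^sub>v x" by (rule eq_vecI) (use x in auto)
  thus "0\<^sub>v n \<in> vspan D x" using lc_zero[OF D] unfolding vspan_def by blast
next
  fix a b assume "a \<in> vspan D x" "b \<in> vspan D x"
  then obtain d r d' r' where a: "a = d + r \<cdot>\<^sub>v x" "d \<in> D" and b: "b = d' + r' \<cdot>\<^sub>v x" "d' \<in> D"
    unfolding vspan_def by blast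
  have dd: "d \<in> carrier_vec n" "d' \<in> carrier_vec n" using a b lc_carrier[OF D] by auto
  have "a + b = (d + d') + (r + r') \<cdot>\<^sub>v x"
    by (rule eq_vecI) (use a b x dd in \<open>auto simp: algebra_simps\<close>)
  thus "a + b \<in> vspan D x" using lc_add[OF D a(2) b(2)] unfolding vspan_def by blast
next
  fix c a assume "a \<in> vspan D x"
  then obtain d r where a: "a = d + r \<cdot>\<^sub>v x" "d \<in> D"
    unfolding vspan_def by blast
  have dd: "d \<in> carrier_vec n" using a lc_carrier[OF D] by auto
  have "c \<cdot>\<^sub>v a = c \<cdot>\<^sub>v d + (c * r) \<cdot>\<^sub>v x"
    by (rule eq_vecI) (use a x dd in \<open>auto simp: algebra_simps\<close>)
  thus "c \<cdot>\<^sub>v a \<in> vspan D x" using lc_smult[OF D a(2)] unfolding vspan_def by blast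
qed

lemma vspan_sup:
  assumes D: "linear_code n D" and x: "x \<in> carrier_vec n"
  shows "D \<subseteq> vspan D x" "x \<in> vspan D x"
proof -
  show "D \<subseteq> vspan D x"
  proof
    fix d assume d: "d \<in> D"
    have "d = d + 0 \<cdot>\<^sub>v x" by (rule eq_vecI) (use d x lc_carrier[OF D] in auto)
    thus "d \<in> vspan D x" using d unfolding vspan_def by blast
  qed
  have "x = 0\<^sub>v n + 1 \<cdot>\<^sub>v x" by (rule eq_vecI) (use x in auto)
  thus "x \<in> vspan D x" using lc_zero[OF D] unfolding vspan_def by blast
qed

lemma vspan_sub:
  assumes E: "linear_code n E" and "D \<subseteq> E" "x \<in> E"
  shows "vspan D x \<subseteq> E"
proof
  fix z assume "z \<in> vspan D x"
  then obtain d r where z: "z = d + r \<cdot>\<^sub>v x" "d \<in> D" unfolding vspan_def by blast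
  have "r \<cdot>\<^sub>v x \<in> E" by (rule lc_smult[OF E assms(3)])
  moreover have "d \<in> E" using z assms(2) by blast
  ultimately show "z \<in> E" using z lc_add[OF E] by simp
qed

lemma vec_add_cancel:
  fixes y a b :: "'a::ab_group_add vec"
  assumes "y \<in> carrier_vec n" "a \<in> carrier_vec n" "b \<in> carrier_vec n" "y + a = y + b"
  shows "a = b"
proof -
  have "a = (y + a) - y" by (rule eq_vecI) (use assms(1,2) in auto)
  moreover have "b = (y + b) - y" by (rule eq_vecI) (use assms(1,3) in auto)
  ultimately show ?thesis using assms(4) by simp
qed

lemma lc_finite: "finite (UNIV::'a::comm_ring_1 set) \<Longrightarrow> linear_code n (C::'a vec set) \<Longrightarrow> finite C"
  using finite_carrier_vec finite_subset unfolding linear_code_def by blast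

lemma exists_x:
  fixes D E :: "'a::{comm_ring_1} vec set"
  assumes loc: "local_ring TYPE('a)" and fin: "finite (UNIV::'a set)"
    and D: "linear_code n D" and E: "linear_code n E" and sub: "D \<subseteq> E" and ne: "D \<noteq> E"
  shows "\<exists>x\<in>E. x \<notin> D \<and> (\<forall>r\<in>max_ideal TYPE('a). r \<cdot>\<^sub>v x \<in> D)"
proof -
  define S where "S = (\<lambda>x. vspan D x) ` (E - D)"
  have "S \<subseteq> Pow E" unfolding S_def using vspan_sub[OF E sub] by blast
  hence finS: "finite S" using lc_finite[OF fin E] by (meson finite_Pow_iff finite_subset)
  have "E - D \<noteq> {}" using sub ne by blast
  hence "S \<noteq> {}" unfolding S_def by blast
  then obtain W where W: "W \<in> S" "\<And>b. b \<in> S \<Longrightarrow> b \<le> W \<Longrightarrow> W = b"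
    using finite_has_minimal[OF finS] by blast
  then obtain x where x: "x \<in> E" "x \<notin> D" "W = vspan D x" unfolding S_def by blast
  have xc: "x \<in> carrier_vec n" using lc_carrier[OF E x(1)] .
  have "r \<cdot>\<^sub>v x \<in> D" if r: "r \<in> max_ideal TYPE('a)" for r
  proof (rule ccontr)
    assume rx: "r \<cdot>\<^sub>v x \<notin> D"
    have rxE: "r \<cdot>\<^sub>v x \<in> E" by (rule lc_smult[OF E x(1)])
    hence inS: "vspan D (r \<cdot>\<^sub>v x) \<in> S" using rx unfolding S_def by blast
    have "vspan D (r \<cdot>\<^sub>v x) \<subseteq> vspan D x"
    proof
      fix z assume "z \<in> vspan D (r \<cdot>\<^sub>v x)"
      then obtain d t where z: "z = d + t \<cdot>\<^sub>v (r \<cdot>\<^sub>v x)" "d \<in> D" unfolding vspan_def by blast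
      have dc: "d \<in> carrier_vec n" using lc_carrier[OF D z(2)] .
      have "z = d + (t * r) \<cdot>\<^sub>v x" by (rule eq_vecI) (use z dc xc in auto)
      thus "z \<in> vspan D x" using z(2) unfolding vspan_def by blast
    qed
    hence "W = vspan D (r \<cdot>\<^sub>v x)" using W(2)[OF inS] x(3) by blast
    hence "x \<in> vspan D (r \<cdot>\<^sub>v x)" using vspan_sup(2)[OF D xc] x(3) by simp
    then obtain d t where dt: "x = d + t \<cdot>\<^sub>v (r \<cdot>\<^sub>v x)" "d \<in> D" unfolding vspan_def by blast
    have dc: "d \<in> carrier_vec n" using lc_carrier[OF D dt(2)] .
    have mi: "is_ideal (max_ideal TYPE('a))" using local_max(1)[OF loc] unfolding is_maximal_ideal_def by blast
    have tr: "t * r \<in> max_ideal TYPE('a)" using ideal_mult[OF mi r] .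
    have "1 - t * r \<notin> max_ideal TYPE('a)"
    proof
      assume "1 - t * r \<in> max_ideal TYPE('a)"
      hence "(1 - t * r) + t * r \<in> max_ideal TYPE('a)" using ideal_add[OF mi _ tr] by blast
      thus False using one_not_max[OF loc] by simp
    qed
    then obtain v where v: "(1 - t * r) * v = 1" using nonmax_unit[OF loc fin] by blast
    have comp: "x $ i = d $ i + t * (r * x $ i)" if "i < n" for i
    proof -
      have "x $ i = (d + t \<cdot>\<^sub>v (r \<cdot>\<^sub>v x)) $ i" using dt(1) by simp
      thus ?thesis using that dc xc by simp
    qed
    have "x = v \<cdot>\<^sub>v d"
    proof (rule eq_vecI)
      fix i assume "i < dim_vec (v \<cdot>\<^sub>v d)"
      hence i: "i < n" using dc by simp
      have "(v \<cdot>\<^sub>v d) $ i = v * d $ i" using i dc by simp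
      also have "d $ i = (1 - t * r) * x $ i" using comp[OF i] by (simp add: algebra_simps)
      finally have "(v \<cdot>\<^sub>v d) $ i = ((1 - t * r) * v) * x $ i" by (simp add: ac_simps)
      thus "x $ i = (v \<cdot>\<^sub>v d) $ i" using v by simp
    qed (use dc xc in simp)
    hence "x \<in> D" using lc_smult[OF D dt(2)] by simp
    thus False using x(2) by simp
  qed
  thus ?thesis using x by blast
qed

definition Phi :: "nat \<Rightarrow> 'a::comm_ring_1 vec set \<Rightarrow> 'a vec set \<Rightarrow> ('a vec \<Rightarrow> 'a) set" where
  "Phi n D E = (\<lambda>y. restrict (\<lambda>z. y \<bullet> z) E) ` dual_code n D"

lemma dual_carrier: "dual_code n D \<subseteq> carrier_vec n" by (auto simp: dual_code_def)

lemma Phi_finite: "finite (UNIV::'a::comm_ring_1 set) \<Longrightarrow> finite (Phi n (D::'a vec set) E)"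
  unfolding Phi_def using finite_carrier_vec finite_subset dual_carrier by (metis finite_imageI)

lemma dual_val_soc:
  fixes D :: "'a::comm_ring_1 vec set"
  assumes D: "linear_code n D" and xc: "x \<in> carrier_vec n"
    and xm: "\<forall>r\<in>max_ideal TYPE('a). r \<cdot>\<^sub>v x \<in> D" and y: "y \<in> dual_code n D"
  shows "y \<bullet> x \<in> annihilator (max_ideal TYPE('a))"
  unfolding annihilator_def
proof (intro CollectI ballI)
  fix w assume w: "w \<in> max_ideal TYPE('a)"
  have yc: "y \<in> carrier_vec n" using y dual_carrier by blast
  have "(y \<bullet> x) * w = y \<bullet> (w \<cdot>\<^sub>v x)" using yc xc by (simp add: mult.commute)
  also have "\<dots> = 0" using y xm w unfolding dual_code_def by blast
  finally show "(y \<bullet> x) * w = 0" .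
qed

lemma count1:
  fixes D E :: "'a::comm_ring_1 vec set"
  assumes fin: "finite (UNIV::'a set)" and D: "linear_code n D" and xc: "x \<in> carrier_vec n"
    and xm: "\<forall>r\<in>max_ideal TYPE('a). r \<cdot>\<^sub>v x \<in> D" and Ec: "E \<subseteq> carrier_vec n"
  shows "card (Phi n D E) \<le> card (annihilator (max_ideal TYPE('a))) * card (Phi n (vspan D x) E)"
proof -
  let ?soc = "annihilator (max_ideal TYPE('a))"
  let ?f = "\<lambda>y. restrict (\<lambda>z. y \<bullet> z) E"
  define T where "T t = ?f ` {y \<in> dual_code n D. y \<bullet> x = t}" for t
  have "Phi n D E \<subseteq> (\<Union>t\<in>?soc. T t)"
  proof
    fix p assume "p \<in> Phi n D E"
    then obtain y where y: "y \<in> dual_code n D" "p = ?f y" unfolding Phi_def by blast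
    have "y \<bullet> x \<in> ?soc" by (rule dual_val_soc[OF D xc xm y(1)])
    moreover have "p \<in> T (y \<bullet> x)" unfolding T_def using y by blast
    ultimately show "p \<in> (\<Union>t\<in>?soc. T t)" by blast
  qed
  have Tle: "card (T t) \<le> card (Phi n (vspan D x) E)" for t
  proof (cases "{y \<in> dual_code n D. y \<bullet> x = t} = {}")
    case True show ?thesis unfolding T_def True by simp
  next
    case False
    then obtain y0 where y0: "y0 \<in> dual_code n D" "y0 \<bullet> x = t" by blast
    have y0c: "y0 \<in> carrier_vec n" using y0 dual_carrier by blast
    have "T t \<subseteq> (\<lambda>\<psi>. restrict (\<lambda>z. y0 \<bullet> z + \<psi> z) E) ` Phi n (vspan D x) E"
    proof
      fix p assume "p \<in> T t"
      then obtain y where y: "y \<in> dual_code n D" "y \<bullet> x = t" "p = ?f y" unfolding T_def by blast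
      have yc: "y \<in> carrier_vec n" using y dual_carrier by blast
      have "y - y0 \<in> dual_code n (vspan D x)"
        unfolding dual_code_def
      proof (intro CollectI conjI ballI)
        show "y - y0 \<in> carrier_vec n" using yc y0c by simp
        fix w assume "w \<in> vspan D x"
        then obtain d r where w: "w = d + r \<cdot>\<^sub>v x" "d \<in> D" unfolding vspan_def by blast
        have dc: "d \<in> carrier_vec n" using lc_carrier[OF D w(2)] .
        have wc: "w \<in> carrier_vec n" using w dc xc by simp
        have "(y - y0) \<bullet> w = y \<bullet> w - y0 \<bullet> w" by (rule minus_scalar_prod_distrib[OF yc y0c wc])
        also have "y \<bullet> w = y \<bullet> d + r * (y \<bullet> x)"
          using w dc xc yc by (simp add: scalar_prod_add_distrib[of y n])
        also have "y0 \<bullet> w = y0 \<bullet> d + r * (y0 \<bullet> x)"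
          using w dc xc y0c by (simp add: scalar_prod_add_distrib[of y0 n])
        also have "y \<bullet> d = 0" using y(1) w(2) unfolding dual_code_def by blast
        also have "y0 \<bullet> d = 0" using y0(1) w(2) unfolding dual_code_def by blast
        finally show "(y - y0) \<bullet> w = 0" using y(2) y0(2) by simp
      qed
      hence "?f (y - y0) \<in> Phi n (vspan D x) E" unfolding Phi_def by blast
      moreover have "p = restrict (\<lambda>z. y0 \<bullet> z + ?f (y - y0) z) E"
      proof
        fix z show "p z = restrict (\<lambda>z. y0 \<bullet> z + ?f (y - y0) z) E z"
        proof (cases "z \<in> E")
          case True
            have True2: "z \<in> carrier_vec n" using True Ec by blast
            have "(y - y0) \<bullet> z = y \<bullet> z - y0 \<bullet> z" by (rule minus_scalar_prod_distrib[OF yc y0c True2])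
            thus ?thesis using y(3) True by simp
        qed (use y(3) in simp)
      qed
      ultimately show "p \<in> (\<lambda>\<psi>. restrict (\<lambda>z. y0 \<bullet> z + \<psi> z) E) ` Phi n (vspan D x) E" by blast
    qed
    hence "card (T t) \<le> card ((\<lambda>\<psi>. restrict (\<lambda>z. y0 \<bullet> z + \<psi> z) E) ` Phi n (vspan D x) E)"
      by (intro card_mono finite_imageI Phi_finite fin)
    also have "\<dots> \<le> card (Phi n (vspan D x) E)" by (rule card_image_le[OF Phi_finite[OF fin]])
    finally show ?thesis .
  qed
  have "card (Phi n D E) \<le> card (\<Union>t\<in>?soc. T t)"
  proof (rule card_mono)
    show "finite (\<Union>t\<in>?soc. T t)"
      by (rule finite_subset[OF _ Phi_finite[OF fin, of n D E]]) (auto simp: T_def Phi_def)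
  qed fact
  also have "\<dots> \<le> (\<Sum>t\<in>?soc. card (T t))" by (rule card_UN_le) (rule finite_subset[OF subset_UNIV fin])
  also have "\<dots> \<le> (\<Sum>t\<in>?soc. card (Phi n (vspan D x) E))" by (rule sum_mono) (rule Tle)
  finally show ?thesis by simp
qed

lemma count2:
  fixes D :: "'a::comm_ring_1 vec set"
  assumes loc: "local_ring TYPE('a)" and fin: "finite (UNIV::'a set)"
    and soc: "annihilator (max_ideal TYPE('a)) = range (\<lambda>r. r * s)"
    and anns: "{r. r * s = 0} = max_ideal TYPE('a)"
    and D: "linear_code n D" and xc: "x \<in> carrier_vec n" and xD: "x \<notin> D"
    and xm: "\<forall>r\<in>max_ideal TYPE('a). r \<cdot>\<^sub>v x \<in> D"
  shows "card (annihilator (max_ideal TYPE('a))) * card D = card (vspan D x)"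
proof -
  let ?m = "max_ideal TYPE('a)"
  have mmax: "is_maximal_ideal ?m" by (rule local_max(1)[OF loc])
  have mi: "is_ideal ?m" using mmax unfolding is_maximal_ideal_def by blast
  have finm: "finite ?m" by (rule finite_subset[OF subset_UNIV fin])
  have "0 \<in> ?m" by (rule ideal_zero[OF mi])
  hence mpos: "card ?m > 0" using finm card_gt_0_iff by blast
  have finD: "finite D" by (rule lc_finite[OF fin D])
  have Dc: "\<And>d. d \<in> D \<Longrightarrow> d \<in> carrier_vec n" using lc_carrier[OF D] by blast
  have a: "card (UNIV::'a set) = card ?m * card (annihilator ?m)"
  proof -
    have "card (UNIV::'a set) = card ?m * card ((\<lambda>r. r * s) ` UNIV)"
    proof (rule card_fibers[OF fin])
      fix a :: 'a
      have "{r \<in> UNIV. r * s = a * s} = (plus a) ` ?m"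
      proof (intro equalityI subsetI)
        fix r assume "r \<in> {r \<in> UNIV. r * s = a * s}"
        hence "(r - a) * s = 0" by (simp add: algebra_simps)
        hence "r - a \<in> ?m" using anns by blast
        moreover have "r = a + (r - a)" by simp
        ultimately show "r \<in> plus a ` ?m" by blast
      next
        fix r assume "r \<in> plus a ` ?m"
        then obtain k where k: "k \<in> ?m" "r = a + k" by blast
        have "k * s = 0" using k(1) anns by blast
        thus "r \<in> {r \<in> UNIV. r * s = a * s}" using k(2) by (simp add: algebra_simps)
      qed
      moreover have "card ((plus a) ` ?m) = card ?m" by (rule card_image) (simp add: inj_on_def)
      ultimately show "card {r \<in> UNIV. r * s = a * s} = card ?m" by simp
    qed
    thus ?thesis using soc by simp
  qed
  define J where "J = {r. r \<cdot>\<^sub>v x \<in> D}"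
  have Jm: "J = ?m"
  proof -
    have "is_ideal J" unfolding is_ideal_def J_def
    proof (intro conjI ballI allI CollectI)
      have "0 \<cdot>\<^sub>v x = 0\<^sub>v n" by (rule eq_vecI) (use xc in auto)
      thus "0 \<cdot>\<^sub>v x \<in> D" using lc_zero[OF D] by simp
    next
      fix a b assume "a \<in> {r. r \<cdot>\<^sub>v x \<in> D}" "b \<in> {r. r \<cdot>\<^sub>v x \<in> D}"
      hence ab: "a \<cdot>\<^sub>v x \<in> D" "b \<cdot>\<^sub>v x \<in> D" by auto
      have "(a + b) \<cdot>\<^sub>v x = a \<cdot>\<^sub>v x + b \<cdot>\<^sub>v x" by (rule eq_vecI) (use xc in \<open>auto simp: algebra_simps\<close>)
      thus "(a + b) \<cdot>\<^sub>v x \<in> D" using lc_add[OF D ab] by simp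
    next
      fix c a assume "a \<in> {r. r \<cdot>\<^sub>v x \<in> D}"
      hence ab: "a \<cdot>\<^sub>v x \<in> D" by auto
      have "(c * a) \<cdot>\<^sub>v x = c \<cdot>\<^sub>v (a \<cdot>\<^sub>v x)" by (rule eq_vecI) (use xc in \<open>auto simp: algebra_simps\<close>)
      thus "(c * a) \<cdot>\<^sub>v x \<in> D" using lc_smult[OF D ab] by simp
    qed
    moreover have "?m \<subseteq> J" using xm unfolding J_def by blast
    moreover have "J \<noteq> UNIV"
    proof
      assume "J = UNIV"
      hence "1 \<cdot>\<^sub>v x \<in> D" unfolding J_def by blast
      thus False using xD by simp
    qed
    ultimately show ?thesis using mmax unfolding is_maximal_ideal_def by blast
  qed
  let ?f = "\<lambda>p::'a \<times> 'a vec. snd p + fst p \<cdot>\<^sub>v x"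
  have img: "?f ` (UNIV \<times> D) = vspan D x" unfolding vspan_def by force
  have c: "card ((UNIV::'a set) \<times> D) = card ?m * card (vspan D x)"
  proof -
    have "card ((UNIV::'a set) \<times> D) = card ?m * card (?f ` (UNIV \<times> D))"
    proof (rule card_fibers)
      show "finite ((UNIV::'a set) \<times> D)" using fin finD by simp
    next
      fix p assume p: "p \<in> (UNIV::'a set) \<times> D"
      obtain a d0 where ad: "p = (a, d0)" "d0 \<in> D" using p by auto
      have d0c: "d0 \<in> carrier_vec n" using Dc[OF ad(2)] .
      have "{q \<in> UNIV \<times> D. ?f q = ?f p} = (\<lambda>k. (a + k, d0 - k \<cdot>\<^sub>v x)) ` ?m"
      proof (intro equalityI subsetI)
        fix q assume q: "q \<in> {q \<in> UNIV \<times> D. ?f q = ?f p}"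
        obtain r d where rd: "q = (r, d)" "d \<in> D" using q by auto
        have dc: "d \<in> carrier_vec n" using Dc[OF rd(2)] .
        have eq: "d + r \<cdot>\<^sub>v x = d0 + a \<cdot>\<^sub>v x" using q rd ad by simp
        have "(r - a) \<cdot>\<^sub>v x = d0 - d"
        proof (rule eq_vecI)
          fix i assume "i < dim_vec (d0 - d)"
          hence i: "i < n" using d0c dc by simp
          have "(d + r \<cdot>\<^sub>v x) $ i = (d0 + a \<cdot>\<^sub>v x) $ i" using eq by simp
          hence "d $ i + r * x $ i = d0 $ i + a * x $ i" using i dc d0c xc by simp
          thus "((r - a) \<cdot>\<^sub>v x) $ i = (d0 - d) $ i" using i dc d0c xc by (simp add: algebra_simps)
        qed (use dc d0c xc in simp)
        hence "r - a \<in> J" unfolding J_def using lc_diff[OF D ad(2) rd(2)] by simp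
        hence km: "r - a \<in> ?m" using Jm by simp
        have "d = d0 - (r - a) \<cdot>\<^sub>v x"
        proof (rule eq_vecI)
          fix i assume "i < dim_vec (d0 - (r - a) \<cdot>\<^sub>v x)"
          hence i: "i < n" using d0c xc by simp
          have "(d + r \<cdot>\<^sub>v x) $ i = (d0 + a \<cdot>\<^sub>v x) $ i" using eq by simp
          hence "d $ i + r * x $ i = d0 $ i + a * x $ i" using i dc d0c xc by simp
          thus "d $ i = (d0 - (r - a) \<cdot>\<^sub>v x) $ i" using i dc d0c xc by (simp add: algebra_simps)
        qed (use dc d0c xc in simp)
        hence "q = (a + (r - a), d0 - (r - a) \<cdot>\<^sub>v x)" using rd by simp
        thus "q \<in> (\<lambda>k. (a + k, d0 - k \<cdot>\<^sub>v x)) ` ?m" using km by blast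
      next
        fix q assume "q \<in> (\<lambda>k. (a + k, d0 - k \<cdot>\<^sub>v x)) ` ?m"
        then obtain k where k: "k \<in> ?m" "q = (a + k, d0 - k \<cdot>\<^sub>v x)" by blast
        have "k \<cdot>\<^sub>v x \<in> D" using xm k(1) by blast
        hence inD: "d0 - k \<cdot>\<^sub>v x \<in> D" by (rule lc_diff[OF D ad(2)])
        have "(d0 - k \<cdot>\<^sub>v x) + (a + k) \<cdot>\<^sub>v x = d0 + a \<cdot>\<^sub>v x"
          by (rule eq_vecI) (use d0c xc in \<open>auto simp: algebra_simps\<close>)
        thus "q \<in> {q \<in> UNIV \<times> D. ?f q = ?f p}" using k(2) inD ad by simp
      qed
      moreover have "card ((\<lambda>k. (a + k, d0 - k \<cdot>\<^sub>v x)) ` ?m) = card ?m"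
        by (rule card_image) (simp add: inj_on_def)
      ultimately show "card {q \<in> UNIV \<times> D. ?f q = ?f p} = card ?m" by simp
    qed
    thus ?thesis using img by simp
  qed
  have c': "card (UNIV::'a set) * card D = card ?m * card (vspan D x)"
    using c by (simp add: card_cartesian_product)
  hence "card ?m * (card (annihilator ?m) * card D) = card ?m * card (vspan D x)"
    by (simp only: a mult.assoc)
  thus ?thesis using mpos by simp
qed

lemma H:
  fixes E :: "'a::comm_ring_1 vec set"
  assumes loc: "local_ring TYPE('a)" and fin: "finite (UNIV::'a set)"
    and soc: "annihilator (max_ideal TYPE('a)) = range (\<lambda>r. r * s)"
    and anns: "{r. r * s = 0} = max_ideal TYPE('a)"
    and E: "linear_code n E"
  shows "linear_code n D \<Longrightarrow> D \<subseteq> E \<Longrightarrow> card (Phi n D E) * card D \<le> card E"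
proof (induction "card E - card D" arbitrary: D rule: less_induct)
  case less
  have D: "linear_code n D" and DE: "D \<subseteq> E" using less.prems by auto
  have finE: "finite E" by (rule lc_finite[OF fin E])
  show ?case
  proof (cases "D = E")
    case True
    have "Phi n D E \<subseteq> {restrict (\<lambda>z. 0) E}"
    proof
      fix p assume "p \<in> Phi n D E"
      then obtain y where y: "y \<in> dual_code n D" "p = restrict (\<lambda>z. y \<bullet> z) E"
        unfolding Phi_def by blast
      have "p = restrict (\<lambda>z. 0) E"
      proof
        fix z show "p z = restrict (\<lambda>z. 0) E z"
          using y True unfolding dual_code_def by (cases "z \<in> E") auto
      qed
      thus "p \<in> {restrict (\<lambda>z. 0) E}" by simp
    qed
    hence "card (Phi n D E) \<le> 1"
      using card_mono[of "{restrict (\<lambda>z. 0) E}" "Phi n D E"] by simp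
    hence "card (Phi n D E) * card D \<le> 1 * card D" by (rule mult_right_mono) simp
    thus ?thesis using True by simp
  next
    case False
    obtain x where x: "x \<in> E" "x \<notin> D" "\<forall>r\<in>max_ideal TYPE('a). r \<cdot>\<^sub>v x \<in> D"
      using exists_x[OF loc fin D E DE False] by blast
    have xc: "x \<in> carrier_vec n" by (rule lc_carrier[OF E x(1)])
    have D'lc: "linear_code n (vspan D x)" by (rule vspan_lc[OF D xc])
    have D'E: "vspan D x \<subseteq> E" by (rule vspan_sub[OF E DE x(1)])
    have "D \<subset> vspan D x" using vspan_sup[OF D xc] x(2) by blast
    hence lt: "card D < card (vspan D x)"
      by (rule psubset_card_mono[OF finite_subset[OF D'E finE]])
    have "card (vspan D x) \<le> card E" by (rule card_mono[OF finE D'E])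
    hence "card E - card (vspan D x) < card E - card D" using lt by linarith
    hence IH: "card (Phi n (vspan D x) E) * card (vspan D x) \<le> card E"
      using less.hyps D'lc D'E by blast
    have c1: "card (Phi n D E) \<le> card (annihilator (max_ideal TYPE('a))) * card (Phi n (vspan D x) E)"
      by (rule count1[OF fin D xc x(3)]) (use E in \<open>simp add: linear_code_def\<close>)
    have c2: "card (annihilator (max_ideal TYPE('a))) * card D = card (vspan D x)"
      by (rule count2[OF loc fin soc anns D xc x(2) x(3)])
    have "card (Phi n D E) * card D \<le> card (annihilator (max_ideal TYPE('a))) * card (Phi n (vspan D x) E) * card D"
      by (rule mult_right_mono[OF c1]) simp
    also have "\<dots> = card (Phi n (vspan D x) E) * card (vspan D x)"
      using c2 by (simp add: ac_simps)
    also have "\<dots> \<le> card E" by (rule IH)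
    finally show ?thesis .
  qed
qed

lemma lc_carrier_vec: "linear_code n (carrier_vec n :: 'a::comm_ring_1 vec set)"
  unfolding linear_code_def by auto

lemma lc_zero_code: "linear_code n {0\<^sub>v n :: 'a::comm_ring_1 vec}"
proof -
  have "0\<^sub>v n + 0\<^sub>v n = (0\<^sub>v n :: 'a vec)" by (rule eq_vecI) auto
  moreover have "r \<cdot>\<^sub>v 0\<^sub>v n = (0\<^sub>v n :: 'a vec)" for r by (rule eq_vecI) auto
  ultimately show ?thesis unfolding linear_code_def by auto
qed

lemma frob_card:
  fixes D :: "'a::comm_ring_1 vec set"
  assumes frob: "local_frobenius TYPE('a)" and fin: "finite (UNIV::'a set)"
    and D: "linear_code n D"
  shows "card D * card (dual_code n D) = card (carrier_vec n :: 'a vec set)"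
proof -
  obtain s where loc: "local_ring TYPE('a)"
    and soc: "annihilator (max_ideal TYPE('a)) = range (\<lambda>r. r * s)"
    and anns: "{r. r * s = 0} = max_ideal TYPE('a)"
    using frob unfolding local_frobenius_def by blast
  let ?V = "carrier_vec n :: 'a vec set"
  have Dc: "D \<subseteq> ?V" using D unfolding linear_code_def by blast
  have finV: "finite ?V" by (rule finite_carrier_vec[OF fin])
  have "card (Phi n D ?V) * card D \<le> card ?V"
    by (rule H[OF loc fin soc anns lc_carrier_vec D Dc])
  moreover have "card (Phi n D ?V) = card (dual_code n D)"
    unfolding Phi_def
  proof (rule card_image, rule inj_onI)
    fix y1 y2 assume y: "y1 \<in> dual_code n D" "y2 \<in> dual_code n D"
      and eq: "restrict (\<lambda>z. y1 \<bullet> z) ?V = restrict (\<lambda>z. y2 \<bullet> z) ?V"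
    have yc: "y1 \<in> ?V" "y2 \<in> ?V" using y dual_carrier by blast+
    show "y1 = y2"
    proof (rule eq_vecI)
      fix i assume "i < dim_vec y2"
      hence i: "i < n" using yc by simp
      have "restrict (\<lambda>z. y1 \<bullet> z) ?V (unit_vec n i) = restrict (\<lambda>z. y2 \<bullet> z) ?V (unit_vec n i)"
        using eq by simp
      thus "y1 $ i = y2 $ i" using i by simp
    qed (use yc in simp)
  qed
  ultimately have le1: "card D * card (dual_code n D) \<le> card ?V" by (simp add: ac_simps)
  have "card (Phi n {0\<^sub>v n} D) * card {0\<^sub>v n :: 'a vec} \<le> card D"
    by (rule H[OF loc fin soc anns D lc_zero_code]) (use lc_zero[OF D] in simp)
  hence P0: "card (Phi n {0\<^sub>v n} D) \<le> card D" by simp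
  have dual0: "dual_code n {0\<^sub>v n} = ?V" unfolding dual_code_def by auto
  let ?f = "\<lambda>y. restrict (\<lambda>z. y \<bullet> z) D"
  have "card ?V = card (dual_code n D) * card (?f ` ?V)"
  proof (rule card_fibers[OF finV])
    fix y0 assume y0: "y0 \<in> ?V"
    have "{y \<in> ?V. ?f y = ?f y0} = (plus y0) ` dual_code n D"
    proof (intro equalityI subsetI)
      fix y assume "y \<in> {y \<in> ?V. ?f y = ?f y0}"
      hence yc: "y \<in> ?V" and eq: "?f y = ?f y0" by auto
      have "y - y0 \<in> dual_code n D" unfolding dual_code_def
      proof (intro CollectI conjI ballI)
        show "y - y0 \<in> ?V" using yc y0 by simp
        fix c assume c: "c \<in> D"
        have cc: "c \<in> ?V" using c Dc by blast
        have "?f y c = ?f y0 c" using eq by simp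
        hence "y \<bullet> c = y0 \<bullet> c" using c by simp
        thus "(y - y0) \<bullet> c = 0" using minus_scalar_prod_distrib[OF yc y0 cc] by simp
      qed
      moreover have "y = y0 + (y - y0)" by (rule eq_vecI) (use yc y0 in auto)
      ultimately show "y \<in> (plus y0) ` dual_code n D" by blast
    next
      fix y assume "y \<in> (plus y0) ` dual_code n D"
      then obtain k where k: "k \<in> dual_code n D" "y = y0 + k" by blast
      have kc: "k \<in> ?V" using k dual_carrier by blast
      have "?f y = ?f y0"
      proof
        fix c show "?f y c = ?f y0 c"
        proof (cases "c \<in> D")
          case True
          have cc: "c \<in> ?V" using True Dc by blast
          have "k \<bullet> c = 0" using k(1) True unfolding dual_code_def by blast
          thus ?thesis using True k(2) add_scalar_prod_distrib[OF y0 kc cc] by simp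
        qed simp
      qed
      thus "y \<in> {y \<in> ?V. ?f y = ?f y0}" using k(2) kc y0 by simp
    qed
    moreover have "card ((plus y0) ` dual_code n D) = card (dual_code n D)"
    proof (rule card_image, rule inj_onI)
      fix a b assume "a \<in> dual_code n D" "b \<in> dual_code n D" "y0 + a = y0 + b"
      thus "a = b" using vec_add_cancel[OF y0] dual_carrier by blast
    qed
    ultimately show "card {y \<in> ?V. ?f y = ?f y0} = card (dual_code n D)" by simp
  qed
  also have "?f ` ?V = Phi n {0\<^sub>v n} D" unfolding Phi_def dual0 ..
  finally have "card ?V \<le> card (dual_code n D) * card D" using P0 by (simp add: mult_left_mono)
  thus ?thesis using le1 by (simp add: ac_simps)
qed

lemma gen_dual_iff:
  fixes G :: "'a::comm_ring_1 mat"
  assumes G: "generator_matrix n C G" and w: "w \<in> carrier_vec n"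
  shows "G *\<^sub>v w = 0\<^sub>v (dim_row G) \<longleftrightarrow> w \<in> dual_code n C"
proof -
  let ?k = "dim_row G"
  have GG: "dim_col G = n" "row_span G = C" using G unfolding generator_matrix_def by blast+
  have Gc: "G \<in> carrier_mat ?k n" using GG(1) unfolding carrier_mat_def by blast
  have C: "C = {transpose_mat G *\<^sub>v c | c. c \<in> carrier_vec ?k}"
    using GG(2) unfolding row_span_def by blast
  have key: "w \<bullet> (transpose_mat G *\<^sub>v y) = y \<bullet> (G *\<^sub>v w)" if y: "y \<in> carrier_vec ?k" for y
  proof -
    have "w \<bullet> (transpose_mat G *\<^sub>v y) = (transpose_mat G *\<^sub>v y) \<bullet> w"
      by (rule comm_scalar_prod[OF w mult_mat_vec_carrier[OF transpose_carrier_mat[THEN iffD2, OF Gc] y]])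
    also have "\<dots> = y \<bullet> (G *\<^sub>v w)" by (rule transpose_vec_mult_scalar[OF Gc w y])
    finally show ?thesis .
  qed
  show ?thesis
  proof
    assume z: "G *\<^sub>v w = 0\<^sub>v ?k"
    show "w \<in> dual_code n C" unfolding dual_code_def
    proof (intro CollectI conjI ballI)
      fix c assume "c \<in> C"
      then obtain y where y: "c = transpose_mat G *\<^sub>v y" "y \<in> carrier_vec ?k" using C by blast
      have "w \<bullet> c = y \<bullet> (G *\<^sub>v w)" using key[OF y(2)] y(1) by simp
      also have "\<dots> = 0" using z y(2) by simp
      finally show "w \<bullet> c = 0" .
    qed (rule w)
  next
    assume d: "w \<in> dual_code n C"
    show "G *\<^sub>v w = 0\<^sub>v ?k"
    proof (rule eq_vecI)
      fix i assume "i < dim_vec (0\<^sub>v ?k :: 'a vec)"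
      hence i: "i < ?k" by simp
      have uc: "unit_vec ?k i \<in> carrier_vec ?k" by simp
      have "transpose_mat G *\<^sub>v unit_vec ?k i \<in> C" using C uc by blast
      hence "w \<bullet> (transpose_mat G *\<^sub>v unit_vec ?k i) = 0" using d unfolding dual_code_def by blast
      hence "unit_vec ?k i \<bullet> (G *\<^sub>v w) = 0" using key[OF uc] by simp
      moreover have "unit_vec ?k i \<bullet> (G *\<^sub>v w) = (G *\<^sub>v w) $ i"
        by (rule scalar_prod_left_unit[OF mult_mat_vec_carrier[OF Gc w] i])
      ultimately show "(G *\<^sub>v w) $ i = (0\<^sub>v ?k :: 'a vec) $ i" using i by simp
    qed simp
  qed
qed

definition code_sum :: "'a::comm_ring_1 vec set \<Rightarrow> 'a vec set \<Rightarrow> 'a vec set" where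
  "code_sum A B = {a + b | a b. a \<in> A \<and> b \<in> B}"

lemma code_sum_lc:
  assumes A: "linear_code n A" and B: "linear_code n B"
  shows "linear_code n (code_sum A B)"
  unfolding linear_code_def
proof (intro conjI ballI allI)
  show "code_sum A B \<subseteq> carrier_vec n"
    using lc_carrier[OF A] lc_carrier[OF B] unfolding code_sum_def by auto
  have "0\<^sub>v n = 0\<^sub>v n + (0\<^sub>v n :: 'a vec)" by (rule eq_vecI) auto
  thus "0\<^sub>v n \<in> code_sum A B" using lc_zero[OF A] lc_zero[OF B] unfolding code_sum_def by blast
next
  fix x y assume "x \<in> code_sum A B" "y \<in> code_sum A B"
  then obtain a b a' b' where x: "x = a + b" "a \<in> A" "b \<in> B" and y: "y = a' + b'" "a' \<in> A" "b' \<in> B"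
    unfolding code_sum_def by blast
  have c: "a \<in> carrier_vec n" "b \<in> carrier_vec n" "a' \<in> carrier_vec n" "b' \<in> carrier_vec n"
    using x y lc_carrier[OF A] lc_carrier[OF B] by auto
  have "x + y = (a + a') + (b + b')" by (rule eq_vecI) (use x y c in auto)
  thus "x + y \<in> code_sum A B" using lc_add[OF A x(2) y(2)] lc_add[OF B x(3) y(3)]
    unfolding code_sum_def by blast
next
  fix r x assume "x \<in> code_sum A B"
  then obtain a b where x: "x = a + b" "a \<in> A" "b \<in> B" unfolding code_sum_def by blast
  have c: "a \<in> carrier_vec n" "b \<in> carrier_vec n" using x lc_carrier[OF A] lc_carrier[OF B] by auto
  have "r \<cdot>\<^sub>v x = r \<cdot>\<^sub>v a + r \<cdot>\<^sub>v b" by (rule eq_vecI) (use x c in \<open>auto simp: algebra_simps\<close>)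
  thus "r \<cdot>\<^sub>v x \<in> code_sum A B" using lc_smult[OF A x(2)] lc_smult[OF B x(3)]
    unfolding code_sum_def by blast
qed

lemma dual_code_sum:
  assumes A: "linear_code n A" and B: "linear_code n B"
  shows "dual_code n (code_sum A B) = dual_code n B \<inter> dual_code n A"
proof (intro equalityI subsetI)
  fix h assume h: "h \<in> dual_code n (code_sum A B)"
  have "A \<subseteq> code_sum A B"
  proof
    fix a assume a: "a \<in> A"
    have "a = a + 0\<^sub>v n" by (rule eq_vecI) (use a lc_carrier[OF A] in auto)
    thus "a \<in> code_sum A B" using a lc_zero[OF B] unfolding code_sum_def by blast
  qed
  moreover have "B \<subseteq> code_sum A B"
  proof
    fix b assume b: "b \<in> B"
    have "b = 0\<^sub>v n + b" by (rule eq_vecI) (use b lc_carrier[OF B] in auto)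
    thus "b \<in> code_sum A B" using b lc_zero[OF A] unfolding code_sum_def by blast
  qed
  ultimately show "h \<in> dual_code n B \<inter> dual_code n A" using h unfolding dual_code_def by blast
next
  fix h assume h: "h \<in> dual_code n B \<inter> dual_code n A"
  have hc: "h \<in> carrier_vec n" using h dual_carrier by blast
  show "h \<in> dual_code n (code_sum A B)" unfolding dual_code_def
  proof (intro CollectI conjI ballI)
    fix c assume "c \<in> code_sum A B"
    then obtain a b where c: "c = a + b" "a \<in> A" "b \<in> B" unfolding code_sum_def by blast
    have cc: "a \<in> carrier_vec n" "b \<in> carrier_vec n" using c lc_carrier[OF A] lc_carrier[OF B] by auto
    have "h \<bullet> c = h \<bullet> a + h \<bullet> b" using scalar_prod_add_distrib[OF hc cc] c by simp
    thus "h \<bullet> c = 0" using h c unfolding dual_code_def by auto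
  qed (rule hc)
qed

lemma card_sum_inter:
  fixes A B :: "'a::comm_ring_1 vec set"
  assumes fin: "finite (UNIV::'a set)" and A: "linear_code n A" and B: "linear_code n B"
  shows "card (code_sum A B) * card (A \<inter> B) = card A * card B"
proof -
  let ?f = "\<lambda>p::'a vec \<times> 'a vec. fst p + snd p"
  have img: "?f ` (A \<times> B) = code_sum A B" unfolding code_sum_def by force
  have "card (A \<times> B) = card (A \<inter> B) * card (?f ` (A \<times> B))"
  proof (rule card_fibers)
    show "finite (A \<times> B)" using lc_finite[OF fin A] lc_finite[OF fin B] by simp
  next
    fix p assume p: "p \<in> A \<times> B"
    obtain a0 b0 where ab: "p = (a0, b0)" "a0 \<in> A" "b0 \<in> B" using p by auto
    have c0: "a0 \<in> carrier_vec n" "b0 \<in> carrier_vec n" using ab lc_carrier[OF A] lc_carrier[OF B] by auto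
    have "{q \<in> A \<times> B. ?f q = ?f p} = (\<lambda>k. (a0 + k, b0 - k)) ` (A \<inter> B)"
    proof (intro equalityI subsetI)
      fix q assume q: "q \<in> {q \<in> A \<times> B. ?f q = ?f p}"
      obtain a b where qab: "q = (a, b)" "a \<in> A" "b \<in> B" using q by auto
      have c: "a \<in> carrier_vec n" "b \<in> carrier_vec n" using qab lc_carrier[OF A] lc_carrier[OF B] by auto
      have eq: "a + b = a0 + b0" using q qab ab by simp
      have comp: "a $ i + b $ i = a0 $ i + b0 $ i" if "i < n" for i
      proof -
        have "(a + b) $ i = (a0 + b0) $ i" using eq by simp
        thus ?thesis using that c c0 by simp
      qed
      have k1: "a - a0 \<in> A" by (rule lc_diff[OF A qab(2) ab(2)])
      have "a - a0 = b0 - b"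
        by (rule eq_vecI) (use c c0 comp in \<open>auto simp: algebra_simps\<close>)
      moreover have "b0 - b \<in> B" by (rule lc_diff[OF B ab(3) qab(3)])
      ultimately have k: "a - a0 \<in> A \<inter> B" using k1 by simp
      have "a = a0 + (a - a0)" by (rule eq_vecI) (use c c0 in auto)
      moreover have "b = b0 - (a - a0)"
        by (rule eq_vecI) (use c c0 comp in \<open>auto simp: algebra_simps\<close>)
      ultimately have "q = (a0 + (a - a0), b0 - (a - a0))" using qab by simp
      thus "q \<in> (\<lambda>k. (a0 + k, b0 - k)) ` (A \<inter> B)" using k by blast
    next
      fix q assume "q \<in> (\<lambda>k. (a0 + k, b0 - k)) ` (A \<inter> B)"
      then obtain k where k: "k \<in> A" "k \<in> B" "q = (a0 + k, b0 - k)" by blast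
      have kc: "k \<in> carrier_vec n" using k lc_carrier[OF A] by auto
      have "a0 + k \<in> A" by (rule lc_add[OF A ab(2) k(1)])
      moreover have "b0 - k \<in> B" by (rule lc_diff[OF B ab(3) k(2)])
      moreover have "(a0 + k) + (b0 - k) = a0 + b0" by (rule eq_vecI) (use kc c0 in auto)
      ultimately show "q \<in> {q \<in> A \<times> B. ?f q = ?f p}" using k(3) ab by simp
    qed
    moreover have "card ((\<lambda>k. (a0 + k, b0 - k)) ` (A \<inter> B)) = card (A \<inter> B)"
    proof (rule card_image, rule inj_onI)
      fix x y assume "x \<in> A \<inter> B" "y \<in> A \<inter> B" "(a0 + x, b0 - x) = (a0 + y, b0 - y)"
      hence e: "a0 + x = a0 + y" by simp
      have "x \<in> carrier_vec n" "y \<in> carrier_vec n" using \<open>x \<in> A \<inter> B\<close> \<open>y \<in> A \<inter> B\<close> lc_carrier[OF A] by auto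
      thus "x = y" using vec_add_cancel[OF c0(1) _ _ e] by blast
    qed
    ultimately show "card {q \<in> A \<times> B. ?f q = ?f p} = card (A \<inter> B)" by simp
  qed
  thus ?thesis using img by (simp add: card_cartesian_product ac_simps)
qed

lemma key_count:
  fixes C1 C2 :: "'a::{comm_ring_1,finite} vec set"
  assumes frob: "local_frobenius TYPE('a)"
    and C1: "linear_code n C1" and C2: "linear_code n C2"
    and gen: "generator_matrix n C1 G1" and pc: "parity_check_matrix n C2 H2"
  shows "card (row_span (H2 * transpose_mat G1)) * card (C1 \<inter> C2) = card C1"
proof -
  have fin: "finite (UNIV::'a set)" by simp
  let ?k = "dim_row G1" and ?r = "dim_row H2"
  have GG: "dim_col G1 = n" "row_span G1 = C1" using gen unfolding generator_matrix_def by blast+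
  have HH: "dim_col H2 = n" "row_span H2 = dual_code n C2"
    using pc unfolding parity_check_matrix_def generator_matrix_def by blast+
  have G1c: "G1 \<in> carrier_mat ?k n" using GG(1) unfolding carrier_mat_def by blast
  have H2c: "H2 \<in> carrier_mat ?r n" using HH(1) unfolding carrier_mat_def by blast
  have G1Tc: "transpose_mat G1 \<in> carrier_mat n ?k" using transpose_carrier_mat[THEN iffD2, OF G1c] .
  have H2Tc: "transpose_mat H2 \<in> carrier_mat n ?r" using transpose_carrier_mat[THEN iffD2, OF H2c] .
  have dimr: "dim_row (H2 * transpose_mat G1) = ?r" by simp
  have tr: "transpose_mat (H2 * transpose_mat G1) = G1 * transpose_mat H2"
    using transpose_mult[OF H2c G1Tc] by simp
  have eqc: "transpose_mat (H2 * transpose_mat G1) *\<^sub>v c = G1 *\<^sub>v (transpose_mat H2 *\<^sub>v c)"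
    if c: "c \<in> carrier_vec ?r" for c
    unfolding tr by (rule assoc_mult_mat_vec[OF G1c H2Tc c])
  have dualH: "dual_code n C2 = {transpose_mat H2 *\<^sub>v c | c. c \<in> carrier_vec ?r}"
    using HH(2) unfolding row_span_def by blast
  have RS: "row_span (H2 * transpose_mat G1) = (\<lambda>h. G1 *\<^sub>v h) ` dual_code n C2"
    unfolding row_span_def dimr dualH
  proof (intro equalityI subsetI)
    fix v assume "v \<in> {transpose_mat (H2 * transpose_mat G1) *\<^sub>v c |c. c \<in> carrier_vec ?r}"
    then obtain c where c: "c \<in> carrier_vec ?r" "v = transpose_mat (H2 * transpose_mat G1) *\<^sub>v c" by blast
    hence "v = G1 *\<^sub>v (transpose_mat H2 *\<^sub>v c)" using eqc by simp
    thus "v \<in> (\<lambda>h. G1 *\<^sub>v h) ` {transpose_mat H2 *\<^sub>v c |c. c \<in> carrier_vec ?r}" using c(1) by blast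
  next
    fix v assume "v \<in> (\<lambda>h. G1 *\<^sub>v h) ` {transpose_mat H2 *\<^sub>v c |c. c \<in> carrier_vec ?r}"
    then obtain c where c: "c \<in> carrier_vec ?r" "v = G1 *\<^sub>v (transpose_mat H2 *\<^sub>v c)" by blast
    hence "v = transpose_mat (H2 * transpose_mat G1) *\<^sub>v c" using eqc by simp
    thus "v \<in> {transpose_mat (H2 * transpose_mat G1) *\<^sub>v c |c. c \<in> carrier_vec ?r}" using c(1) by blast
  qed
  let ?D2 = "dual_code n C2" and ?D1 = "dual_code n C1"
  have D2lc: "linear_code n ?D2" by (rule dual_lc) (use C2 in \<open>simp add: linear_code_def\<close>)
  have D1lc: "linear_code n ?D1" by (rule dual_lc) (use C1 in \<open>simp add: linear_code_def\<close>)
  have fib: "card ?D2 = card (?D2 \<inter> ?D1) * card ((\<lambda>h. G1 *\<^sub>v h) ` ?D2)"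
  proof (rule card_fibers[OF lc_finite[OF fin D2lc]])
    fix h0 assume h0: "h0 \<in> ?D2"
    have h0c: "h0 \<in> carrier_vec n" using h0 dual_carrier by blast
    have "{h \<in> ?D2. G1 *\<^sub>v h = G1 *\<^sub>v h0} = (plus h0) ` (?D2 \<inter> ?D1)"
    proof (intro equalityI subsetI)
      fix h assume "h \<in> {h \<in> ?D2. G1 *\<^sub>v h = G1 *\<^sub>v h0}"
      hence h: "h \<in> ?D2" "G1 *\<^sub>v h = G1 *\<^sub>v h0" by auto
      have hc: "h \<in> carrier_vec n" using h dual_carrier by blast
      have "G1 *\<^sub>v (h - h0) = G1 *\<^sub>v h - G1 *\<^sub>v h0" by (rule mult_minus_distrib_mat_vec[OF G1c hc h0c])
      also have "\<dots> = 0\<^sub>v ?k"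
        by (rule eq_vecI) (use h(2) mult_mat_vec_carrier[OF G1c h0c] in simp_all)
      finally have "h - h0 \<in> ?D1" using gen_dual_iff[OF gen] hc h0c by simp
      moreover have "h - h0 \<in> ?D2" by (rule lc_diff[OF D2lc h(1) h0])
      moreover have "h = h0 + (h - h0)" by (rule eq_vecI) (use hc h0c in auto)
      ultimately show "h \<in> (plus h0) ` (?D2 \<inter> ?D1)" by blast
    next
      fix h assume "h \<in> (plus h0) ` (?D2 \<inter> ?D1)"
      then obtain k where k: "k \<in> ?D2" "k \<in> ?D1" "h = h0 + k" by blast
      have kc: "k \<in> carrier_vec n" using k dual_carrier by blast
      have z: "G1 *\<^sub>v k = 0\<^sub>v ?k" using gen_dual_iff[OF gen kc] k(2) by simp
      have "G1 *\<^sub>v h = G1 *\<^sub>v h0 + G1 *\<^sub>v k" unfolding k(3) by (rule mult_add_distrib_mat_vec[OF G1c h0c kc])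
      also have "\<dots> = G1 *\<^sub>v h0" unfolding z by (rule right_zero_vec[OF mult_mat_vec_carrier[OF G1c h0c]])
      finally show "h \<in> {h \<in> ?D2. G1 *\<^sub>v h = G1 *\<^sub>v h0}" using lc_add[OF D2lc h0 k(1)] k(3) by simp
    qed
    moreover have "card ((plus h0) ` (?D2 \<inter> ?D1)) = card (?D2 \<inter> ?D1)"
    proof (rule card_image, rule inj_onI)
      fix a b assume ab: "a \<in> ?D2 \<inter> ?D1" "b \<in> ?D2 \<inter> ?D1" "h0 + a = h0 + b"
      have "a \<in> carrier_vec n" "b \<in> carrier_vec n" using ab(1,2) dual_carrier by blast+
      thus "a = b" using vec_add_cancel[OF h0c _ _ ab(3)] by blast
    qed
    ultimately show "card {h \<in> ?D2. G1 *\<^sub>v h = G1 *\<^sub>v h0} = card (?D2 \<inter> ?D1)" by simp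
  qed
  have Ssum: "?D2 \<inter> ?D1 = dual_code n (code_sum C1 C2)" by (rule dual_code_sum[OF C1 C2, symmetric])
  have Slc: "linear_code n (code_sum C1 C2)" by (rule code_sum_lc[OF C1 C2])
  have f2: "card C2 * card ?D2 = card (carrier_vec n :: 'a vec set)" by (rule frob_card[OF frob fin C2])
  have fS: "card (code_sum C1 C2) * card (dual_code n (code_sum C1 C2)) = card (carrier_vec n :: 'a vec set)"
    by (rule frob_card[OF frob fin Slc])
  have si: "card (code_sum C1 C2) * card (C1 \<inter> C2) = card C1 * card C2" by (rule card_sum_inter[OF fin C1 C2])
  define P where "P = card (row_span (H2 * transpose_mat G1))"
  define K where "K = card (dual_code n (code_sum C1 C2))"
  have Kpos: "K > 0" unfolding K_def
    using lc_zero[OF dual_lc[of "code_sum C1 C2" n]] lc_finite[OF fin dual_lc[of "code_sum C1 C2" n]]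
      Slc card_gt_0_iff unfolding linear_code_def by blast
  have C2pos: "card C2 > 0" using lc_zero[OF C2] lc_finite[OF fin C2] card_gt_0_iff by blast
  have d2: "card ?D2 = K * P" using fib unfolding K_def P_def Ssum RS by simp
  have "card (code_sum C1 C2) * K = card C2 * P * K" using f2 fS d2 unfolding K_def by (simp add: ac_simps)
  hence S: "card (code_sum C1 C2) = card C2 * P" using Kpos by simp
  have "card C2 * (P * card (C1 \<inter> C2)) = card C2 * card C1" using si S by (simp add: ac_simps)
  hence "P * card (C1 \<inter> C2) = card C1" using C2pos by simp
  thus ?thesis unfolding P_def .
qed

lemma q_ge2:
  assumes loc: "local_ring TYPE('a::comm_ring_1)" and fin: "finite (UNIV::'a set)"
  shows "residue_q TYPE('a) \<ge> 2"
proof -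
  let ?r = "{(x, y). x - y \<in> max_ideal TYPE('a)} :: ('a \<times> 'a) set"
  have mi: "is_ideal (max_ideal TYPE('a))" using local_max(1)[OF loc] unfolding is_maximal_ideal_def by blast
  have A: "?r `` {0} \<in> UNIV // ?r" by (rule quotientI) simp
  have B: "?r `` {1} \<in> UNIV // ?r" by (rule quotientI) simp
  have "0 \<in> ?r `` {0}" using ideal_zero[OF mi] by simp
  moreover have "0 \<notin> ?r `` {1}" using one_not_max[OF loc] by simp
  ultimately have ne: "?r `` {0} \<noteq> ?r `` {1}" by blast
  have finQ: "finite (UNIV // ?r)"
    by (rule finite_subset[of _ "Pow UNIV"]) (auto simp: fin Finite_Set.finite_set)
  have "card {?r `` {0}, ?r `` {1}} \<le> card (UNIV // ?r)"
    by (rule card_mono[OF finQ]) (use A B in blast)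
  thus ?thesis using ne unfolding residue_q_def by simp
qed

theorem theorem3p10:
  fixes C1 C2 :: "'a::{comm_ring_1, finite} vec set"
    and G1 G2 H1 H2 :: "'a mat"
    and n l :: nat
  assumes "local_frobenius TYPE('a)"
    and "linear_code n C1" and "linear_code n C2"
    and "generator_matrix n C1 G1" and "parity_check_matrix n C1 H1"
    and "generator_matrix n C2 G2" and "parity_check_matrix n C2 H2"
  shows "DLIP (residue_q TYPE('a)) l C1 C2 \<longleftrightarrow>
    (rank_q (residue_q TYPE('a)) (H2 * transpose_mat G1) = rank_q (residue_q TYPE('a)) G1 - real l \<or>
     rank_q (residue_q TYPE('a)) (H1 * transpose_mat G2) = rank_q (residue_q TYPE('a)) G2 - real l)"
proof -
  have fin: "finite (UNIV::'a set)" by simp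
  have loc: "local_ring TYPE('a)" using assms(1) unfolding local_frobenius_def by blast
  let ?q = "residue_q TYPE('a)"
  have q2: "?q \<ge> 2" by (rule q_ge2[OF loc fin])
  define P1 where "P1 = card (row_span (H2 * transpose_mat G1))"
  define P2 where "P2 = card (row_span (H1 * transpose_mat G2))"
  define I where "I = card (C1 \<inter> C2)"
  have k1: "P1 * I = card C1" unfolding P1_def I_def
    by (rule key_count[OF assms(1) assms(2) assms(3) assms(4) assms(7)])
  have k2: "P2 * I = card C2" unfolding P2_def I_def
    using key_count[OF assms(1) assms(3) assms(2) assms(6) assms(5)] by (simp add: Int_commute)
  have C1pos: "card C1 > 0" using lc_zero[OF assms(2)] lc_finite[OF fin assms(2)] card_gt_0_iff by blast
  have C2pos: "card C2 > 0" using lc_zero[OF assms(3)] lc_finite[OF fin assms(3)] card_gt_0_iff by blast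
  have Ipos: "I > 0" and P1pos: "P1 > 0" using k1 C1pos by (metis gr0I mult_is_0)+
  have P2pos: "P2 > 0" using k2 C2pos by (metis gr0I mult_is_0)
  have r1: "rank_q ?q G1 = log ?q (card C1)"
    using assms(4) unfolding rank_q_def generator_matrix_def by simp
  have r2: "rank_q ?q G2 = log ?q (card C2)"
    using assms(6) unfolding rank_q_def generator_matrix_def by simp
  have l1: "log ?q (card C1) = log ?q P1 + log ?q I"
  proof -
    have "real (card C1) = real P1 * real I" using k1 by (metis of_nat_mult)
    thus ?thesis using P1pos Ipos by (simp add: log_mult)
  qed
  have l2: "log ?q (card C2) = log ?q P2 + log ?q I"
  proof -
    have "real (card C2) = real P2 * real I" using k2 by (metis of_nat_mult)
    thus ?thesis using P2pos Ipos by (simp add: log_mult)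
  qed
  have d: "DLIP ?q l C1 C2 \<longleftrightarrow> log ?q I = real l"
    unfolding DLIP_def code_dim_def I_def ..
  have e1: "rank_q ?q (H2 * transpose_mat G1) = log ?q P1" unfolding rank_q_def P1_def ..
  have e2: "rank_q ?q (H1 * transpose_mat G2) = log ?q P2" unfolding rank_q_def P2_def ..
  show ?thesis unfolding d e1 e2 r1 r2 l1 l2 by linarith
qed

end
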